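(* Let $n\in\mathbb{N}$ and let $m_1,\dots,m_n>0$ be arbitrary masses. Consider $n$ point particles on the real line with positions $q_1(t)<q_2(t)<\dots<q_n(t)$ (ties only at collision instants), moving freely with constant velocities between collisions and undergoing elastic binary collisions (as described in the context), with the motion considered for all times $t\in\mathbb{R}$. If the total number of collisions (over all $t\in\mathbb{R}$) is strictly smaller than $n-1$, then all particles have the same velocity, so that in fact no collision occurs at all.
   Context: Dynamics: $n$ point particles of masses $m_1,\dots,m_n>0$ move on $\mathbb{R}$; their order is preserved, i.e. $q_k(t)\le q_{k+1}(t)$ for all $t$. Between collisions each particle moves with constant velocity. A collision is an instant where $q_i=q_{i+1}$; in a binary collision of particles $i$ and $i+1$ with incoming velocities $v_i,v_{i+1}$, the outgoing velocities are $v_i'=\frac{(m_i-m_{i+1})v_i+2m_{i+1}v_{i+1}}{m_i+m_{i+1}}$, $v_{i+1}'=\frac{(m_{i+1}-m_i)v_{i+1}+2m_i v_i}{m_i+m_{i+1}}$ (conservation of momentum and kinetic energy); all other velocities are unchanged. *)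

theory Defs
  imports "HOL-Analysis.Analysis"
begin

text \<open>Particles are indexed 0, ..., n-1; q i t is the position of particle i at time t,
  m i its mass.  A collision is a pair (t, i) with particles i and i+1 at the same place at time t.\<close>

definition collisions :: "nat \<Rightarrow> (nat \<Rightarrow> real \<Rightarrow> real) \<Rightarrow> (real \<times> nat) set" where
  "collisions n q = {(t, i). Suc i < n \<and> q i t = q (Suc i) t}"

definition out_left :: "real \<Rightarrow> real \<Rightarrow> real \<Rightarrow> real \<Rightarrow> real" where
  "out_left mi mj vi vj = ((mi - mj) * vi + 2 * mj * vj) / (mi + mj)"

definition out_right :: "real \<Rightarrow> real \<Rightarrow> real \<Rightarrow> real \<Rightarrow> real" where
  "out_right mi mj vi vj = ((mj - mi) * vj + 2 * mi * vi) / (mi + mj)"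

definition elastic_motion :: "nat \<Rightarrow> (nat \<Rightarrow> real) \<Rightarrow> (nat \<Rightarrow> real \<Rightarrow> real) \<Rightarrow> bool" where
  "elastic_motion n m q \<longleftrightarrow>
     \<comment> \<open>continuous trajectories\<close>
     (\<forall>i<n. continuous_on UNIV (q i)) \<and>
     \<comment> \<open>order is preserved\<close>
     (\<forall>t i. Suc i < n \<longrightarrow> q i t \<le> q (Suc i) t) \<and>
     \<comment> \<open>free motion with constant velocity on collision-free time intervals\<close>
     (\<forall>a b. a < b \<and> (\<forall>t\<in>{a<..<b}. \<forall>i. (t, i) \<notin> collisions n q) \<longrightarrow>
        (\<forall>i<n. \<exists>v c. \<forall>t\<in>{a<..<b}. q i t = v * t + c)) \<and>
     \<comment> \<open>at every instant: incoming (left) and outgoing (right) velocities exist,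
         only binary collisions occur, and the elastic collision law holds\<close>
     (\<forall>t. \<exists>vl vr :: nat \<Rightarrow> real.
        (\<forall>i<n. (q i has_real_derivative vl i) (at_left t) \<and>
               (q i has_real_derivative vr i) (at_right t)) \<and>
        (\<forall>i. Suc (Suc i) < n \<longrightarrow> \<not> (q i t = q (Suc i) t \<and> q (Suc i) t = q (Suc (Suc i)) t)) \<and>
        (\<forall>i. Suc i < n \<longrightarrow> q i t = q (Suc i) t \<longrightarrow>
              vr i = out_left (m i) (m (Suc i)) (vl i) (vl (Suc i)) \<and>
              vr (Suc i) = out_right (m i) (m (Suc i)) (vl i) (vl (Suc i))) \<and>
        (\<forall>i<n. (\<not> (Suc i < n \<and> q i t = q (Suc i) t)) \<and>
               (\<not> (0 < i \<and> q (i - 1) t = q i t)) \<longrightarrow> vr i = vl i))"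

end

theory Submission
  imports Defs
begin

lemma aff_val_left:
  fixes f :: "real \<Rightarrow> real"
  assumes "continuous_on UNIV f" "\<delta> > 0" "\<forall>y\<in>{u-\<delta><..<u}. f y = a*y+b"
  shows "f u = a*u+b"
proof -
  have 1: "(f \<longlongrightarrow> f u) (at_left u)"
    using assms(1) by (meson UNIV_I continuous_on_def tendsto_within_subset top_greatest)
  have ev: "eventually (\<lambda>y. a*y+b = f y) (at_left u)"
    using eventually_at_left_real[of "u-\<delta>" u] assms(2,3) by (auto elim: eventually_mono)
  have "((\<lambda>y. a*y+b) \<longlongrightarrow> a*u+b) (at_left u)"
    by (intro tendsto_intros)
  hence "(f \<longlongrightarrow> a*u+b) (at_left u)" using Lim_transform_eventually[OF _ ev] by blast
  thus ?thesis using 1 tendsto_unique trivial_limit_at_left_real by blast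
qed

lemma aff_val_right:
  fixes f :: "real \<Rightarrow> real"
  assumes "continuous_on UNIV f" "\<delta> > 0" "\<forall>y\<in>{u<..<u+\<delta>}. f y = a*y+b"
  shows "f u = a*u+b"
proof -
  have 1: "(f \<longlongrightarrow> f u) (at_right u)"
    using assms(1) by (meson UNIV_I continuous_on_def tendsto_within_subset top_greatest)
  have ev: "eventually (\<lambda>y. a*y+b = f y) (at_right u)"
    using eventually_at_right_real[of u "u+\<delta>"] assms(2,3) by (auto elim: eventually_mono)
  have "((\<lambda>y. a*y+b) \<longlongrightarrow> a*u+b) (at_right u)"
    by (intro tendsto_intros)
  hence "(f \<longlongrightarrow> a*u+b) (at_right u)" using Lim_transform_eventually[OF _ ev] by blast
  thus ?thesis using 1 tendsto_unique trivial_limit_at_right_real by blast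
qed

lemma aff_deriv_left:
  fixes f :: "real \<Rightarrow> real"
  assumes "\<delta> > 0" "\<forall>y\<in>{u-\<delta><..<u}. f y = a*y+b" "f u = a*u+b"
  shows "(f has_real_derivative a) (at_left u)"
proof -
  have ev: "eventually (\<lambda>y. f y = a*y+b) (at_left u)"
    using eventually_at_left_real[of "u-\<delta>" u] assms by (auto elim: eventually_mono)
  have "((\<lambda>y. a*y+b) has_real_derivative a) (at_left u)"
    by (auto intro!: derivative_eq_intros)
  thus ?thesis using has_field_derivative_cong_eventually[OF ev assms(3)] by simp
qed

lemma aff_deriv_right:
  fixes f :: "real \<Rightarrow> real"
  assumes "\<delta> > 0" "\<forall>y\<in>{u<..<u+\<delta>}. f y = a*y+b" "f u = a*u+b"
  shows "(f has_real_derivative a) (at_right u)"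
proof -
  have ev: "eventually (\<lambda>y. f y = a*y+b) (at_right u)"
    using eventually_at_right_real[of u "u+\<delta>"] assms by (auto elim: eventually_mono)
  have "((\<lambda>y. a*y+b) has_real_derivative a) (at_right u)"
    by (auto intro!: derivative_eq_intros)
  thus ?thesis using has_field_derivative_cong_eventually[OF ev assms(3)] by simp
qed

lemma deriv_unique_left:
  fixes f :: "real \<Rightarrow> real"
  assumes "(f has_real_derivative D) (at_left u)" "(f has_real_derivative E) (at_left u)"
  shows "D = E"
  using assms unfolding has_field_derivative_iff
  using tendsto_unique trivial_limit_at_left_real by blast

lemma deriv_unique_right:
  fixes f :: "real \<Rightarrow> real"
  assumes "(f has_real_derivative D) (at_right u)" "(f has_real_derivative E) (at_right u)"
  shows "D = E"
  using assms unfolding has_field_derivative_iff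
  using tendsto_unique trivial_limit_at_right_real by blast

lemma gap_right:
  fixes T :: "real set"
  assumes "finite T"
  shows "\<exists>\<delta>>0. \<forall>t\<in>T. \<not> (u < t \<and> t < u + \<delta>)"
proof -
  let ?S = "insert 1 ((\<lambda>t. t - u) ` {t\<in>T. u < t})"
  have "finite ?S" using assms by auto
  have pos: "\<forall>x\<in>?S. x > 0" by auto
  define \<delta> where "\<delta> = Min ?S"
  have "\<delta> > 0" unfolding \<delta>_def using \<open>finite ?S\<close> pos by auto
  moreover have "\<forall>t\<in>T. \<not> (u < t \<and> t < u + \<delta>)"
  proof (intro ballI notI)
    fix t assume "t \<in> T" "u < t \<and> t < u + \<delta>"
    hence "t - u \<in> ?S" by auto
    hence "\<delta> \<le> t - u" unfolding \<delta>_def using \<open>finite ?S\<close> by auto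
    thus False using \<open>u < t \<and> t < u + \<delta>\<close> by simp
  qed
  ultimately show ?thesis by blast
qed

lemma extend_left:
  fixes f :: "real \<Rightarrow> real"
  assumes aff: "\<forall>a b. a < b \<and> {a<..<b} \<inter> T = {} \<longrightarrow> (\<exists>v c. \<forall>t\<in>{a<..<b}. f t = v * t + c)"
  and Tfree: "\<forall>t\<in>T. t1 \<le> t"
  shows "\<exists>v c. \<forall>s. s < t1 \<longrightarrow> f s = v * s + c"
proof -
  obtain v c where vc: "\<forall>t\<in>{t1-1<..<t1}. f t = v * t + c"
    using aff[rule_format, of "t1-1" t1] Tfree by fastforce
  have "f s = v * s + c" if "s < t1" for s
  proof -
    obtain v' c' where vc': "\<forall>t\<in>{s-1<..<t1}. f t = v' * t + c'"
      using aff[rule_format, of "s-1" t1] Tfree \<open>s<t1\<close> by fastforce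
    have e1: "v' * (t1-1/2) + c' = v * (t1-1/2) + c"
      using vc[rule_format, of "t1-1/2"] vc'[rule_format, of "t1-1/2"] \<open>s<t1\<close> by simp
    have e2: "v' * (t1-1/4) + c' = v * (t1-1/4) + c"
      using vc[rule_format, of "t1-1/4"] vc'[rule_format, of "t1-1/4"] \<open>s<t1\<close> by simp
    from e1 e2 have "v' = v" by (simp add: algebra_simps)
    with e1 have "c' = c" by simp
    note \<open>v' = v\<close> this
    thus ?thesis using vc' \<open>s<t1\<close> by simp
  qed
  thus ?thesis by blast
qed


lemma propagate:
  fixes f :: "nat \<Rightarrow> real \<Rightarrow> real" and T :: "real set"
  assumes fin: "finite T"
  and cont: "\<forall>j<n. continuous_on UNIV (f j)"
  and aff: "\<forall>a b. a < b \<and> {a<..<b} \<inter> T = {} \<longrightarrow> (\<forall>j<n. \<exists>v c. \<forall>t\<in>{a<..<b}. f j t = v * t + c)"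
  and init: "\<forall>j<n. \<forall>s. s < tz \<longrightarrow> f j s = a j * s + b j"
  and step: "\<forall>t. (\<forall>j<n. (f j has_real_derivative a j) (at_left t)) \<longrightarrow> (\<forall>j<n. (f j has_real_derivative a j) (at_right t))"
  shows "\<forall>j<n. \<forall>t. f j t = a j * t + b j"
proof (rule ccontr)
  define P where "P t \<longleftrightarrow> (\<forall>j<n. \<forall>s. s < t \<longrightarrow> f j s = a j * s + b j)" for t
  have mono: "P t \<Longrightarrow> t' \<le> t \<Longrightarrow> P t'" for t t' unfolding P_def by auto
  assume "\<not> ?thesis"
  then obtain j0 t0 where "j0 < n" "f j0 t0 \<noteq> a j0 * t0 + b j0" by blast
  hence "\<not> P (t0+1)" unfolding P_def by force
  define B where "B = {t. \<not> P t}"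
  have Bne: "B \<noteq> {}" using \<open>\<not> P (t0+1)\<close> B_def by blast
  have Ptz: "P tz" using init P_def by blast
  have Bgt: "\<forall>t\<in>B. tz \<le> t" using mono Ptz B_def by (metis linorder_le_cases mem_Collect_eq)
  hence bdd: "bdd_below B" by (meson bdd_below.unfold)
  define u where "u = Inf B"
  have Pu: "P u"
    unfolding P_def
  proof (intro allI impI)
    fix j s assume "j < n" "s < u"
    have "(s+u)/2 \<notin> B"
    proof
      assume "(s+u)/2 \<in> B"
      hence "u \<le> (s+u)/2" unfolding u_def using bdd cInf_lower by blast
      thus False using \<open>s<u\<close> by simp
    qed
    hence "P ((s+u)/2)" unfolding B_def by simp
    thus "f j s = a j * s + b j" using \<open>j<n\<close> \<open>s<u\<close> unfolding P_def by simp
  qed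
  have left: "\<forall>y\<in>{u-1<..<u}. f j y = a j * y + b j" if "j<n" for j
    using Pu that unfolding P_def by simp
  have valu: "f j u = a j * u + b j" if "j<n" for j
    using aff_val_left[OF _ _ left[OF that]] cont that by simp
  have "\<forall>j<n. (f j has_real_derivative a j) (at_left u)"
    using aff_deriv_left[OF _ left valu] by simp
  hence rd: "\<forall>j<n. (f j has_real_derivative a j) (at_right u)" using step by blast
  obtain \<delta> where d: "\<delta> > 0" "\<forall>t\<in>T. \<not> (u < t \<and> t < u + \<delta>)" using gap_right[OF fin] by blast
  have "{u<..<u+\<delta>} \<inter> T = {}" using d by auto
  hence affr: "\<forall>j<n. \<exists>v c. \<forall>t\<in>{u<..<u+\<delta>}. f j t = v * t + c" using aff d by simp
  have right: "\<forall>t\<in>{u<..<u+\<delta>}. f j t = a j * t + b j" if jn: "j<n" for j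
  proof -
    obtain v c where vc: "\<forall>t\<in>{u<..<u+\<delta>}. f j t = v * t + c" using affr jn by blast
    have fu: "f j u = v * u + c" using aff_val_right[OF _ d(1) vc] cont jn by simp
    have "(f j has_real_derivative v) (at_right u)" using aff_deriv_right[OF d(1) vc fu] .
    hence "v = a j" using rd jn deriv_unique_right by blast
    moreover have "c = b j" using fu valu[OF jn] calculation by simp
    ultimately show ?thesis using vc by simp
  qed
  have "P (u+\<delta>)" unfolding P_def
  proof (intro allI impI)
    fix j s assume js: "j < n" "s < u+\<delta>"
    show "f j s = a j * s + b j"
    proof (cases "s < u")
      case True thus ?thesis using Pu js unfolding P_def by simp
    next
      case False
      show ?thesis
      proof (cases "s = u")
        case True thus ?thesis using valu js by simp
      next
        case False
        thus ?thesis using right[OF js(1)] js \<open>\<not> s < u\<close> by simp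
      qed
    qed
  qed
  moreover have "\<exists>t\<in>B. t < u + \<delta>"
    using cInf_less_iff[OF Bne bdd, of "u+\<delta>"] d(1) unfolding u_def by simp
  ultimately show False using mono B_def by (metis less_le_not_le mem_Collect_eq)
qed


lemma out_eq:
  assumes "mi + mj > 0"
  shows "out_left mi mj V V = V" "out_right mi mj V V = V"
  using assms by (auto simp: out_left_def out_right_def field_simps)

lemma out_mom:
  assumes "mi + mj > 0"
  shows "mi * (out_left mi mj x y - x) + mj * (out_right mi mj x y - y) = 0"
  using assms by (auto simp: out_left_def out_right_def field_simps)

lemma mom_sum:
  fixes vl vr :: "nat \<Rightarrow> real"
  assumes masses: "\<forall>i<n. m i > 0"
  and tri: "\<forall>i. Suc (Suc i) < n \<longrightarrow> \<not> (q i t = q (Suc i) t \<and> q (Suc i) t = q (Suc (Suc i)) t)"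
  and law: "\<forall>i. Suc i < n \<longrightarrow> q i t = q (Suc i) t \<longrightarrow>
              vr i = out_left (m i) (m (Suc i)) (vl i) (vl (Suc i)) \<and>
              vr (Suc i) = out_right (m i) (m (Suc i)) (vl i) (vl (Suc i))"
  and keep: "\<forall>i<n. (\<not> (Suc i < n \<and> q i t = q (Suc i) t)) \<and>
               (\<not> (0 < i \<and> q (i - 1) t = q i t)) \<longrightarrow> vr i = vl i"
  shows "k \<le> n \<Longrightarrow> (\<Sum>j<k. m j * (vr j - vl j)) =
     (if 0 < k \<and> k < n \<and> q (k - 1) t = q k t then m (k - 1) * (vr (k - 1) - vl (k - 1)) else 0)"
proof (induction k)
  case 0 then show ?case by simp
next
  case (Suc k)
  hence kn: "k < n" by simp
  have IH: "(\<Sum>j<k. m j * (vr j - vl j)) =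
     (if 0 < k \<and> q (k - 1) t = q k t then m (k - 1) * (vr (k - 1) - vl (k - 1)) else 0)"
    using Suc kn by simp
  show ?case
  proof (cases "Suc k < n \<and> q k t = q (Suc k) t")
    case True
    have "\<not> (0 < k \<and> q (k - 1) t = q k t)"
    proof
      assume h: "0 < k \<and> q (k - 1) t = q k t"
      then obtain i where "k = Suc i" by (cases k) auto
      thus False using tri[rule_format, of i] h True by simp
    qed
    hence z: "(\<Sum>j<k. m j * (vr j - vl j)) = 0" using IH by (simp only: if_not_P if_False)
    show ?thesis using z True by simp
  next
    case False
    show ?thesis
    proof (cases "0 < k \<and> q (k - 1) t = q k t")
      case True
      then obtain i where i: "k = Suc i" by (cases k) auto
      have "vr i = out_left (m i) (m k) (vl i) (vl k) \<and> vr k = out_right (m i) (m k) (vl i) (vl k)"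
        using law[rule_format, of i] i True kn by simp
      moreover have "m i + m k > 0" using masses[rule_format, of i] masses[rule_format, of k] kn i by simp
      ultimately have "m i * (vr i - vl i) + m k * (vr k - vl k) = 0"
        using out_mom by simp
      hence e: "m i * (vr i - vl i) + m k * (vr k - vl k) = 0" .
      have z: "(\<Sum>j<k. m j * (vr j - vl j)) = m i * (vr i - vl i)" using IH True i by simp
      have "(\<Sum>j<Suc k. m j * (vr j - vl j)) = 0" using z e by simp
      thus ?thesis using False by auto
    next
      case False2: False
      have "vr k = vl k" using keep[rule_format, of k] kn False False2 by simp
      have z: "(\<Sum>j<k. m j * (vr j - vl j)) = 0" using IH False2 by (simp only: if_not_P if_False)
      have "(\<Sum>j<Suc k. m j * (vr j - vl j)) = 0" using z \<open>vr k = vl k\<close> by simp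
      thus ?thesis using False by auto
    qed
  qed
qed

lemma sum_affine:
  fixes g :: "nat \<Rightarrow> real \<Rightarrow> real"
  shows "\<forall>j<k. \<exists>v c. \<forall>t\<in>S. g j t = v * t + c \<Longrightarrow> \<exists>v c. \<forall>t\<in>S. (\<Sum>j<k. m j * g j t) = v * t + c"
proof (induction k)
  case 0 have "\<forall>t\<in>S. (\<Sum>j<0. m j * g j t) = 0 * t + 0" by simp
  then show ?case by blast
next
  case (Suc k)
  obtain v c where vc: "\<forall>t\<in>S. (\<Sum>j<k. m j * g j t) = v * t + c"
    using Suc.IH Suc.prems by (meson less_SucI)
  obtain v' c' where vc': "\<forall>t\<in>S. g k t = v' * t + c'" using Suc.prems by blast
  have "\<forall>t\<in>S. (\<Sum>j<Suc k. m j * g j t) = (v + m k * v') * t + (c + m k * c')"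
    using vc vc' by (simp add: algebra_simps)
  thus ?case by blast
qed

lemma affine_le_zero:
  fixes \<alpha> \<beta> :: real
  assumes "\<forall>t. \<alpha> * t + \<beta> \<le> 0"
  shows "\<alpha> = 0"
proof (rule ccontr)
  assume "\<alpha> \<noteq> 0"
  have "\<alpha> * ((1 - \<beta>) / \<alpha>) + \<beta> \<le> 0" using assms by blast
  thus False using \<open>\<alpha> \<noteq> 0\<close> by simp
qed

lemma affine_bounded_left:
  fixes \<alpha> \<beta> K :: real
  assumes "\<forall>s. s < t1 \<longrightarrow> 0 \<le> \<alpha> * s + \<beta> \<and> \<alpha> * s + \<beta> \<le> K"
  shows "\<alpha> = 0"
proof (rule ccontr)
  assume ne: "\<alpha> \<noteq> 0"
  show False
  proof (cases "\<alpha> > 0")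
    case True
    define s where "s = min (t1 - 1) ((- \<beta> - 1) / \<alpha>)"
    have "s < t1" unfolding s_def by simp
    have "\<alpha> * s \<le> \<alpha> * ((- \<beta> - 1) / \<alpha>)" using True unfolding s_def
      by (intro mult_left_mono) auto
    hence "\<alpha> * s + \<beta> \<le> -1" using True by simp
    thus False using assms \<open>s<t1\<close> by fastforce
  next
    case False
    hence neg: "\<alpha> < 0" using ne by simp
    define s where "s = min (t1 - 1) ((K - \<beta> + 1) / \<alpha>)"
    have "s < t1" unfolding s_def by simp
    have "\<alpha> * ((K - \<beta> + 1) / \<alpha>) \<le> \<alpha> * s" using neg unfolding s_def
      by (intro mult_left_mono_neg) auto
    hence "\<alpha> * s + \<beta> \<ge> K + 1" using neg by simp
    thus False using assms \<open>s<t1\<close> by fastforce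
  qed
qed


lemma motion_parts:
  assumes "elastic_motion n m q"
  shows "\<forall>i<n. continuous_on UNIV (q i)"
    "\<forall>t i. Suc i < n \<longrightarrow> q i t \<le> q (Suc i) t"
    "\<forall>a b. a < b \<and> {a<..<b} \<inter> fst ` collisions n q = {} \<longrightarrow>
        (\<forall>i<n. \<exists>v c. \<forall>t\<in>{a<..<b}. q i t = v * t + c)"
    "\<forall>t. \<exists>vl vr :: nat \<Rightarrow> real.
        (\<forall>i<n. (q i has_real_derivative vl i) (at_left t) \<and>
               (q i has_real_derivative vr i) (at_right t)) \<and>
        (\<forall>i. Suc (Suc i) < n \<longrightarrow> \<not> (q i t = q (Suc i) t \<and> q (Suc i) t = q (Suc (Suc i)) t)) \<and>
        (\<forall>i. Suc i < n \<longrightarrow> q i t = q (Suc i) t \<longrightarrow>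
              vr i = out_left (m i) (m (Suc i)) (vl i) (vl (Suc i)) \<and>
              vr (Suc i) = out_right (m i) (m (Suc i)) (vl i) (vl (Suc i))) \<and>
        (\<forall>i<n. (\<not> (Suc i < n \<and> q i t = q (Suc i) t)) \<and>
               (\<not> (0 < i \<and> q (i - 1) t = q i t)) \<longrightarrow> vr i = vl i)"
proof -
  note d = assms[unfolded elastic_motion_def]
  show "\<forall>i<n. continuous_on UNIV (q i)" using d by blast
  show "\<forall>t i. Suc i < n \<longrightarrow> q i t \<le> q (Suc i) t" using d by blast
  show "\<forall>t. \<exists>vl vr :: nat \<Rightarrow> real.
        (\<forall>i<n. (q i has_real_derivative vl i) (at_left t) \<and>
               (q i has_real_derivative vr i) (at_right t)) \<and>
        (\<forall>i. Suc (Suc i) < n \<longrightarrow> \<not> (q i t = q (Suc i) t \<and> q (Suc i) t = q (Suc (Suc i)) t)) \<and>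
        (\<forall>i. Suc i < n \<longrightarrow> q i t = q (Suc i) t \<longrightarrow>
              vr i = out_left (m i) (m (Suc i)) (vl i) (vl (Suc i)) \<and>
              vr (Suc i) = out_right (m i) (m (Suc i)) (vl i) (vl (Suc i))) \<and>
        (\<forall>i<n. (\<not> (Suc i < n \<and> q i t = q (Suc i) t)) \<and>
               (\<not> (0 < i \<and> q (i - 1) t = q i t)) \<longrightarrow> vr i = vl i)" using d by blast
  show "\<forall>a b. a < b \<and> {a<..<b} \<inter> fst ` collisions n q = {} \<longrightarrow>
        (\<forall>i<n. \<exists>v c. \<forall>t\<in>{a<..<b}. q i t = v * t + c)"
  proof (rule allI, rule allI, rule impI)
    fix a b assume h: "a < b \<and> {a<..<b} \<inter> fst ` collisions n q = {}"
    have "\<forall>t\<in>{a<..<b}. \<forall>i. (t, i) \<notin> collisions n q"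
    proof (intro ballI allI notI)
      fix t i assume "t \<in> {a<..<b}" "(t, i) \<in> collisions n q"
      hence "t \<in> {a<..<b} \<inter> fst ` collisions n q" by (metis IntI fst_conv image_eqI)
      thus False using h by blast
    qed
    thus "\<forall>i<n. \<exists>v c. \<forall>t\<in>{a<..<b}. q i t = v * t + c" using d h by blast
  qed
qed

lemma first_time:
  fixes T :: "real set"
  assumes "finite T"
  shows "\<exists>t1. \<forall>t\<in>T. t1 \<le> t"
  using assms by (metis Min_le finite_insert insertCI)

lemma momentum_affine:
  assumes masses: "\<forall>i<n. m i > 0"
    and motion: "elastic_motion n m q"
    and fin: "finite (collisions n q)"
    and kn: "k \<le> n"
    and nocol: "\<forall>t. \<not> (0 < k \<and> k < n \<and> q (k - 1) t = q k t)"
  shows "\<exists>a b. \<forall>t. (\<Sum>j<k. m j * q j t) = a * t + b"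
proof -
  define T where "T = fst ` collisions n q"
  have finT: "finite T" using fin T_def by simp
  note mp = motion_parts[OF motion, folded T_def]
  define F where "F t = (\<Sum>j<k. m j * q j t)" for t
  have affF: "\<forall>a b. a < b \<and> {a<..<b} \<inter> T = {} \<longrightarrow> (\<exists>v c. \<forall>t\<in>{a<..<b}. F t = v * t + c)"
  proof (intro allI impI)
    fix a b assume "a < b \<and> {a<..<b} \<inter> T = {}"
    hence "\<forall>j<k. \<exists>v c. \<forall>t\<in>{a<..<b}. q j t = v * t + c" using mp(3) kn by auto
    thus "\<exists>v c. \<forall>t\<in>{a<..<b}. F t = v * t + c" unfolding F_def by (rule sum_affine)
  qed
  obtain t1 where t1: "\<forall>t\<in>T. t1 \<le> t" using first_time[OF finT] by blast
  obtain a b where ab: "\<forall>s. s < t1 \<longrightarrow> F s = a * s + b" using extend_left[OF affF t1] by blast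
  have contF: "continuous_on UNIV F"
    unfolding F_def using mp(1) kn by (intro continuous_intros) auto
  have step: "\<forall>t. (F has_real_derivative a) (at_left t) \<longrightarrow> (F has_real_derivative a) (at_right t)"
  proof (intro allI impI)
    fix t assume al: "(F has_real_derivative a) (at_left t)"
    obtain vl vr where vv: "\<forall>i<n. (q i has_real_derivative vl i) (at_left t) \<and>
               (q i has_real_derivative vr i) (at_right t)"
      and tri: "\<forall>i. Suc (Suc i) < n \<longrightarrow> \<not> (q i t = q (Suc i) t \<and> q (Suc i) t = q (Suc (Suc i)) t)"
      and law: "\<forall>i. Suc i < n \<longrightarrow> q i t = q (Suc i) t \<longrightarrow>
              vr i = out_left (m i) (m (Suc i)) (vl i) (vl (Suc i)) \<and>
              vr (Suc i) = out_right (m i) (m (Suc i)) (vl i) (vl (Suc i))"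
      and keep: "\<forall>i<n. (\<not> (Suc i < n \<and> q i t = q (Suc i) t)) \<and>
               (\<not> (0 < i \<and> q (i - 1) t = q i t)) \<longrightarrow> vr i = vl i"
      using mp(4) by blast
    have dl: "(F has_real_derivative (\<Sum>j<k. m j * vl j)) (at_left t)"
      unfolding F_def using vv kn by (intro DERIV_sum DERIV_cmult) auto
    have dr: "(F has_real_derivative (\<Sum>j<k. m j * vr j)) (at_right t)"
      unfolding F_def using vv kn by (intro DERIV_sum DERIV_cmult) auto
    have "(\<Sum>j<k. m j * (vr j - vl j)) = 0"
      using mom_sum[where vl=vl and vr=vr and t=t and q=q and m=m and n=n and k=k, OF masses tri law keep kn] nocol[rule_format, of t] by (simp only: if_not_P if_False)
    hence "(\<Sum>j<k. m j * vr j) = (\<Sum>j<k. m j * vl j)"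
      by (simp add: right_diff_distrib sum_subtractf)
    moreover have "a = (\<Sum>j<k. m j * vl j)" using deriv_unique_left[OF al dl] .
    ultimately show "(F has_real_derivative a) (at_right t)" using dr by simp
  qed
  have "\<forall>j<(1::nat). \<forall>t. (\<lambda>_. F) j t = (\<lambda>_. a) j * t + (\<lambda>_. b) j"
    apply (rule propagate[where T = T and tz = t1])
    using finT contF affF ab step by auto
  thus ?thesis unfolding F_def by auto
qed


lemma order_chain:
  assumes "\<forall>t i. Suc i < n \<longrightarrow> q i t \<le> q (Suc i) t"
  shows "i \<le> j \<Longrightarrow> j < n \<Longrightarrow> q i t \<le> (q j t :: real)"
proof (induction j)
  case 0 thus ?case by simp
next
  case (Suc j)
  show ?case
  proof (cases "i = Suc j")
    case True thus ?thesis by simp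
  next
    case False
    hence "q i t \<le> q j t" using Suc by simp
    also have "\<dots> \<le> q (Suc j) t" using assms Suc.prems by blast
    finally show ?thesis .
  qed
qed

theorem mainTheorem1:
  fixes n :: nat and m :: "nat \<Rightarrow> real" and q :: "nat \<Rightarrow> real \<Rightarrow> real"
  assumes masses: "\<forall>i<n. m i > 0"
    and motion: "elastic_motion n m q"
    and fin: "finite (collisions n q)"
    and few: "card (collisions n q) < n - 1"
  shows "(\<exists>v. \<forall>i<n. \<forall>t. (q i has_real_derivative v) (at t)) \<and> collisions n q = {}"
proof -
  define C where "C = collisions n q"
  define T where "T = fst ` C"
  have finC: "finite C" using fin C_def by simp
  have finT: "finite T" using finC T_def by simp
  note mp = motion_parts[OF motion, folded C_def, folded T_def]
  have ord: "\<And>i j t. i \<le> j \<Longrightarrow> j < n \<Longrightarrow> q i t \<le> q j t"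
    using order_chain[OF mp(2)] by blast
  have n2: "2 \<le> n" using few by simp
  have mnn: "\<And>j. j < n \<Longrightarrow> 0 \<le> m j" using masses by (simp add: less_imp_le)
  have sub: "snd ` C \<subseteq> {..<n-1}" unfolding C_def collisions_def by auto
  have "card (snd ` C) < card {..<n-1}"
    using card_image_le[OF finC, of snd] few C_def by simp
  hence "snd ` C \<noteq> {..<n-1}" by auto
  then obtain i0 where i0n: "i0 < n - 1" and i0C: "i0 \<notin> snd ` C" using sub by blast
  have Si0: "Suc i0 < n" using i0n by simp
  have nocolL: "\<forall>t. q i0 t \<noteq> q (Suc i0) t"
  proof (intro allI notI)
    fix t assume "q i0 t = q (Suc i0) t"
    hence "(t, i0) \<in> C" unfolding C_def collisions_def using Si0 by simp
    thus False using i0C by force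
  qed
  obtain aL bL where FL: "\<forall>t. (\<Sum>j<Suc i0. m j * q j t) = aL * t + bL"
    using momentum_affine[OF masses motion fin, of "Suc i0"] Si0 nocolL by auto
  obtain aT bT where FT: "\<forall>t. (\<Sum>j<n. m j * q j t) = aT * t + bT"
    using momentum_affine[OF masses motion fin, of n] by auto
  define R where "R = {Suc i0..<n}"
  define L where "L = {..<Suc i0}"
  have splitg: "(\<Sum>j<n. g j) = (\<Sum>j\<in>L. g j) + (\<Sum>j\<in>R. g j)" for g :: "nat \<Rightarrow> real"
  proof -
    have "{..<n} = L \<union> R" "L \<inter> R = {}" unfolding L_def R_def using Si0 by auto
    thus ?thesis by (simp add: sum.union_disjoint L_def R_def)
  qed
  define FLf where "FLf t = (\<Sum>j\<in>L. m j * q j t)" for t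
  define FRf where "FRf t = (\<Sum>j\<in>R. m j * q j t)" for t
  have FLa: "FLf t = aL * t + bL" for t using FL unfolding FLf_def L_def by simp
  have FRa: "FRf t = (aT - aL) * t + (bT - bL)" for t
    using FT[rule_format, of t] FLa[of t] splitg[of "\<lambda>j. m j * q j t"] unfolding FLf_def FRf_def
    by (simp add: algebra_simps)
  define Lm where "Lm = (\<Sum>j\<in>L. m j)"
  define Rm where "Rm = (\<Sum>j\<in>R. m j)"
  have Lm0: "Lm > 0" unfolding Lm_def L_def
    by (rule sum_pos) (use masses Si0 in auto)
  have Rm0: "Rm > 0" unfolding Rm_def R_def
    by (rule sum_pos) (use masses Si0 in auto)
  have L1: "FLf t \<le> Lm * q i0 t" for t
  proof -
    have "FLf t \<le> (\<Sum>j\<in>L. m j * q i0 t)" unfolding FLf_def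
      by (rule sum_mono) (use masses ord Si0 in \<open>auto simp: L_def intro!: mult_left_mono\<close>)
    thus ?thesis by (simp add: Lm_def sum_distrib_right)
  qed
  have R1: "Rm * q (Suc i0) t \<le> FRf t" for t
  proof -
    have "(\<Sum>j\<in>R. m j * q (Suc i0) t) \<le> FRf t" unfolding FRf_def
      by (rule sum_mono) (use masses ord in \<open>auto simp: R_def intro!: mult_left_mono\<close>)
    thus ?thesis by (simp add: Rm_def sum_distrib_right)
  qed
  have qq: "q i0 t \<le> q (Suc i0) t" for t using ord Si0 by simp
  have Gpos: "Rm * FLf t \<le> Lm * FRf t" for t
  proof -
    have "Rm * FLf t \<le> Rm * (Lm * q i0 t)" using L1 Rm0 by (simp add: mult_left_mono)
    also have "\<dots> \<le> Rm * (Lm * q (Suc i0) t)" using qq Lm0 Rm0 by (simp add: mult_left_mono)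
    also have "\<dots> = Lm * (Rm * q (Suc i0) t)" by simp
    also have "\<dots> \<le> Lm * FRf t" using R1 Lm0 by (simp add: mult_left_mono)
    finally show ?thesis .
  qed
  define \<alpha> where "\<alpha> = Lm * (aT - aL) - Rm * aL"
  define \<gamma> where "\<gamma> = Lm * (bT - bL) - Rm * bL"
  have Gform: "Lm * FRf t - Rm * FLf t = \<alpha> * t + \<gamma>" for t
    unfolding \<alpha>_def \<gamma>_def FRa FLa by (simp add: algebra_simps)
  have "\<forall>t. (- \<alpha>) * t + (- \<gamma>) \<le> 0"
  proof
    fix t show "(- \<alpha>) * t + (- \<gamma>) \<le> 0" using Gform[of t] Gpos[of t] by linarith
  qed
  hence "- \<alpha> = 0" by (rule affine_le_zero)
  hence G: "Lm * FRf t - Rm * FLf t = \<gamma>" for t using Gform by simp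
  have lastn: "n - 1 < n" "Suc i0 \<le> n - 1" using Si0 by auto
  have B1: "Rm * m 0 * (q i0 t - q 0 t) \<le> \<gamma>" for t
  proof -
    have "m 0 * (q i0 t - q 0 t) \<le> (\<Sum>j\<in>L. m j * (q i0 t - q j t))"
      by (rule member_le_sum[where f = "\<lambda>j. m j * (q i0 t - q j t)"])
        (use mnn ord Si0 in \<open>auto simp: L_def intro!: mult_nonneg_nonneg\<close>)
    also have "\<dots> = Lm * q i0 t - FLf t"
      by (simp add: Lm_def FLf_def right_diff_distrib sum_subtractf sum_distrib_right)
    finally have "Rm * (m 0 * (q i0 t - q 0 t)) \<le> Rm * (Lm * q i0 t - FLf t)"
      using Rm0 by (simp add: mult_left_mono)
    also have "\<dots> = Rm * Lm * q i0 t - Rm * FLf t" by (simp add: algebra_simps)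
    also have "\<dots> \<le> Rm * Lm * q (Suc i0) t - Rm * FLf t"
      using mult_left_mono[OF qq[of t], of "Rm * Lm"] Lm0 Rm0 by simp
    also have "\<dots> = Lm * (Rm * q (Suc i0) t) - Rm * FLf t" by (simp add: algebra_simps)
    also have "\<dots> \<le> Lm * FRf t - Rm * FLf t"
      using mult_left_mono[OF R1[of t], of Lm] Lm0 by simp
    also have "\<dots> = \<gamma>" using G[of t] .
    finally show ?thesis by (simp add: mult.assoc)
  qed
  have B2: "Lm * Rm * (q (Suc i0) t - q i0 t) \<le> \<gamma>" for t
  proof -
    have "Lm * Rm * (q (Suc i0) t - q i0 t) = Lm * (Rm * q (Suc i0) t) - Rm * (Lm * q i0 t)"
      by (simp add: algebra_simps)
    also have "\<dots> \<le> Lm * FRf t - Rm * FLf t"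
    proof -
      have "Lm * (Rm * q (Suc i0) t) \<le> Lm * FRf t" using mult_left_mono[OF R1[of t], of Lm] Lm0 by simp
      moreover have "Rm * FLf t \<le> Rm * (Lm * q i0 t)" using mult_left_mono[OF L1[of t], of Rm] Rm0 by simp
      ultimately show ?thesis by linarith
    qed
    also have "\<dots> = \<gamma>" using G[of t] .
    finally show ?thesis .
  qed
  have B3: "Lm * m (n - 1) * (q (n - 1) t - q (Suc i0) t) \<le> \<gamma>" for t
  proof -
    have "m (n - 1) * (q (n - 1) t - q (Suc i0) t) \<le> (\<Sum>j\<in>R. m j * (q j t - q (Suc i0) t))"
      by (rule member_le_sum[where f = "\<lambda>j. m j * (q j t - q (Suc i0) t)"])
        (use mnn ord lastn in \<open>auto simp: R_def intro!: mult_nonneg_nonneg\<close>)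
    also have "\<dots> = FRf t - Rm * q (Suc i0) t"
      by (simp add: Rm_def FRf_def right_diff_distrib sum_subtractf sum_distrib_right)
    finally have "Lm * (m (n - 1) * (q (n - 1) t - q (Suc i0) t)) \<le> Lm * (FRf t - Rm * q (Suc i0) t)"
      using Lm0 by (simp add: mult_left_mono)
    also have "\<dots> = Lm * FRf t - Rm * (Lm * q (Suc i0) t)" by (simp add: algebra_simps)
    also have "\<dots> \<le> Lm * FRf t - Rm * (Lm * q i0 t)"
      using mult_left_mono[OF qq[of t], of "Rm * Lm"] Lm0 Rm0 by (simp add: algebra_simps)
    also have "\<dots> \<le> Lm * FRf t - Rm * FLf t"
      using mult_left_mono[OF L1[of t], of Rm] Rm0 by simp
    also have "\<dots> = \<gamma>" using G[of t] .
    finally show ?thesis by (simp add: mult.assoc)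
  qed
  have m0: "m 0 > 0" "m (n - 1) > 0" using masses n2 by auto
  define K where "K = \<gamma> / (Rm * m 0) + \<gamma> / (Lm * Rm) + \<gamma> / (Lm * m (n - 1))"
  have W: "q (n - 1) t - q 0 t \<le> K" for t
  proof -
    have p1: "Rm * m 0 > 0" "Lm * Rm > 0" "Lm * m (n - 1) > 0" using Lm0 Rm0 m0 by auto
    have "q i0 t - q 0 t \<le> \<gamma> / (Rm * m 0)" using B1[of t] p1(1) by (simp add: pos_le_divide_eq mult.commute)
    moreover have "q (Suc i0) t - q i0 t \<le> \<gamma> / (Lm * Rm)" using B2[of t] p1(2) by (simp add: pos_le_divide_eq mult.commute)
    moreover have "q (n - 1) t - q (Suc i0) t \<le> \<gamma> / (Lm * m (n - 1))" using B3[of t] p1(3) by (simp add: pos_le_divide_eq mult.commute)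
    ultimately show ?thesis unfolding K_def by simp
  qed
  obtain t1 where t1: "\<forall>t\<in>T. t1 \<le> t" using first_time[OF finT] by blast
  have "\<forall>j<n. \<exists>v c. \<forall>s. s < t1 \<longrightarrow> q j s = v * s + c"
  proof (intro allI impI)
    fix j assume "j < n"
    have "\<forall>a b. a < b \<and> {a<..<b} \<inter> T = {} \<longrightarrow> (\<exists>v c. \<forall>t\<in>{a<..<b}. q j t = v * t + c)"
      using mp(3) \<open>j<n\<close> by blast
    thus "\<exists>v c. \<forall>s. s < t1 \<longrightarrow> q j s = v * s + c" using extend_left t1 by blast
  qed
  hence exvc: "\<forall>j<n. \<exists>v c. \<forall>s. s < t1 \<longrightarrow> q j s = v * s + c" .
  have "\<forall>j\<in>{..<n}. \<exists>p. \<forall>s. s < t1 \<longrightarrow> q j s = fst p * s + snd p"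
  proof
    fix j assume "j \<in> {..<n}"
    then obtain v c where "\<forall>s. s < t1 \<longrightarrow> q j s = v * s + c" using exvc by blast
    thus "\<exists>p. \<forall>s. s < t1 \<longrightarrow> q j s = fst p * s + snd p" by (intro exI[of _ "(v, c)"]) simp
  qed
  from bchoice[OF this] obtain pp where pp: "\<forall>j\<in>{..<n}. \<forall>s. s < t1 \<longrightarrow> q j s = fst (pp j) * s + snd (pp j)"
    by blast
  define vv where "vv j = fst (pp j)" for j
  define cc where "cc j = snd (pp j)" for j
  have vc: "\<forall>j<n. \<forall>s. s < t1 \<longrightarrow> q j s = vv j * s + cc j" using pp vv_def cc_def by simp
  define V where "V = vv 0"
  have vvV: "vv j = V" if "j < n" for j
  proof -
    have "\<forall>s. s < t1 \<longrightarrow> 0 \<le> (vv j - vv 0) * s + (cc j - cc 0) \<and> (vv j - vv 0) * s + (cc j - cc 0) \<le> K"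
    proof (intro allI impI)
      fix s assume "s < t1"
      have e: "(vv j - vv 0) * s + (cc j - cc 0) = q j s - q 0 s"
        using vc \<open>s<t1\<close> that n2 by (simp add: algebra_simps)
      have "q 0 s \<le> q j s" using ord that by simp
      moreover have "q j s \<le> q (n - 1) s" using ord that by simp
      ultimately show "0 \<le> (vv j - vv 0) * s + (cc j - cc 0) \<and> (vv j - vv 0) * s + (cc j - cc 0) \<le> K"
        using e W[of s] by simp
    qed
    hence "vv j - vv 0 = 0" by (rule affine_bounded_left)
    thus ?thesis unfolding V_def by simp
  qed
  have step: "\<forall>t. (\<forall>j<n. (q j has_real_derivative (\<lambda>_. V) j) (at_left t)) \<longrightarrow>
      (\<forall>j<n. (q j has_real_derivative (\<lambda>_. V) j) (at_right t))"
  proof (intro allI impI)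
    fix t j assume al: "\<forall>j<n. (q j has_real_derivative (\<lambda>_. V) j) (at_left t)" and jn: "j < n"
    obtain vl vr where vv: "\<forall>i<n. (q i has_real_derivative vl i) (at_left t) \<and>
               (q i has_real_derivative vr i) (at_right t)"
      and law: "\<forall>i. Suc i < n \<longrightarrow> q i t = q (Suc i) t \<longrightarrow>
              vr i = out_left (m i) (m (Suc i)) (vl i) (vl (Suc i)) \<and>
              vr (Suc i) = out_right (m i) (m (Suc i)) (vl i) (vl (Suc i))"
      and keep: "\<forall>i<n. (\<not> (Suc i < n \<and> q i t = q (Suc i) t)) \<and>
               (\<not> (0 < i \<and> q (i - 1) t = q i t)) \<longrightarrow> vr i = vl i"
      using mp(4) by blast
    have vlV: "vl i = V" if "i < n" for i
      using deriv_unique_left[of "q i" "vl i" t V] vv al that by simp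
    have "vr j = V"
    proof (cases "Suc j < n \<and> q j t = q (Suc j) t")
      case True
      hence "vr j = out_left (m j) (m (Suc j)) V V" using law vlV jn by simp
      also have "\<dots> = V"
        using out_eq(1)[of "m j" "m (Suc j)" V] masses[rule_format, of j] masses[rule_format, of "Suc j"] True jn by simp
      finally show ?thesis .
    next
      case False
      show ?thesis
      proof (cases "0 < j \<and> q (j - 1) t = q j t")
        case True
        then obtain i where i: "j = Suc i" by (cases j) auto
        hence "vr j = out_right (m i) (m j) V V" using law[rule_format, of i] vlV jn True by simp
        also have "\<dots> = V"
          using out_eq(2)[of "m i" "m j" V] masses[rule_format, of i] masses[rule_format, of j] i jn by simp
        finally show ?thesis .
      qed (use keep jn False vlV in auto)
    qed
    moreover have "(q j has_real_derivative vr j) (at_right t)" using vv jn by blast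
    ultimately show "(q j has_real_derivative (\<lambda>_. V) j) (at_right t)" by simp
  qed
  have vcV: "\<forall>j<n. \<forall>s. s < t1 \<longrightarrow> q j s = (\<lambda>_. V) j * s + cc j"
    using vc vvV by simp
  have qall: "\<forall>j<n. \<forall>t. q j t = (\<lambda>_. V) j * t + cc j"
    by (rule propagate[OF finT mp(1) mp(3) vcV step])
  have derivs: "\<forall>i<n. \<forall>t. (q i has_real_derivative V) (at t)"
  proof (intro allI impI)
    fix i t assume "i < n"
    hence "q i = (\<lambda>t. V * t + cc i)" using qall by auto
    thus "(q i has_real_derivative V) (at t)" by (auto intro!: derivative_eq_intros)
  qed
  have "C = {}"
  proof (rule ccontr)
    assume "C \<noteq> {}"
    then obtain t i where ti: "(t, i) \<in> C" by auto
    hence si: "Suc i < n" "q i t = q (Suc i) t" unfolding C_def collisions_def by auto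
    have qi: "q i s = V * s + cc i" for s using qall si(1) by simp
    have qsi: "q (Suc i) s = V * s + cc (Suc i)" for s using qall si(1) by simp
    have ceq: "cc i = cc (Suc i)" using si(2) qi[of t] qsi[of t] by simp
    have "q i s = q (Suc i) s" for s using qi[of s] qsi[of s] ceq by simp
    hence "\<forall>s. (s, i) \<in> C" unfolding C_def collisions_def using si by simp
    hence "range (\<lambda>s::real. (s, i)) \<subseteq> C" by auto
    hence "finite (range (\<lambda>s::real. (s, i)))" using finC finite_subset by blast
    moreover have "inj (\<lambda>s::real. (s, i))" by (auto intro: injI)
    ultimately have "finite (UNIV :: real set)" using finite_imageD by blast
    thus False by (simp add: infinite_UNIV_char_0)
  qed
  thus ?thesis using derivs C_def by blast
qed

end
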